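(* In the standing setting below, suppose $0\le\rho<\rho_m$ in $\Omega_T$ for a constant $\rho_m>1$, and let $b\ge0$, $e\ge0$ be given continuous functions on $\Omega_T$ with $e$ continuously differentiable in $r$ (twice, as needed for the equation to be classical). Let $n\ge0$ be a classical solution of $$\partial_t n+\frac1r\partial_r(rvn)=\frac1r\partial_r(rD_n\partial_r n)-\frac1r\partial_r\Big(r\,\chi_n\rho\, n\, H(1-n/n_m)\,\Phi(\partial_r e)\Big)+k_{nb}\,b\frac{e}{1+e}+k_n\, n\frac{e}{1+e}-\lambda_{nb}\, n b-\lambda_{nn}n^2$$ in $R(t)<r<L$, $0<t<T$, with boundary conditions $(1-\gamma)n+\gamma L\big(\partial_r n-\frac{\chi_n}{D_n}\rho\, n\,H(1-n/n_m)\Phi(\partial_r e)\big)=0$ at $r=L$, $\partial_r n=0$ at $r=R(t)$, and initial condition $n(r,0)=0$. Here $\gamma\in[0,1]$ and $D_n,\chi_n,n_m,k_{nb},k_n,\lambda_{nb},\lambda_{nn},k_{sg}$ are positive constants. Then, with $$N=\max\Big\{\frac{k_{nb}}{\lambda_{nb}},\ \frac{k_n+\beta(\rho_m-1)}{\lambda_{nn}},\ n_m\Big\},$$ one has $0\le n(r,t)\le N$ in $\Omega_T$.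
   Context: Standing setting. Fix constants $L>0$, $0<R_0<L$, $\beta>0$, $T>0$. Let $R\in C^1([0,T))$ with $R(0)=R_0$ and $0<R(t)<L$, and set $\Omega_T=\{(r,t): R(t)\le r\le L,\ 0\le t<T\}$. Let $\rho\ge 0$ be a classical (continuously differentiable) function on $\Omega_T$ (the matrix density), and define the pressure $P(r,t)=P(\rho(r,t))$ where $P(\rho)=\beta(\rho-1)$ for $\rho\ge1$ and $P(\rho)=0$ for $\rho<1$. Let $v(r,t)$ be a classical function on $\Omega_T$ (twice continuously differentiable in $r$) satisfying $\frac1r\partial_r(r\,\partial_r v)-\frac{v}{r^2}=\partial_r P$ for $R(t)<r<L$, with $v(L,t)=0$, $\partial_r v(R(t),t)=P(R(t),t)$, and the free-boundary law $\dot R(t)=v(R(t),t)$. Define $Q(t)=\int_{R(t)}^L y\,P(y,t)\,dy$. Further notation: $H(u)=\dfrac{u^6}{10^{-6}+u^6}$ for $u\ge0$ and $H(u)=0$ for $u<0$; $\Phi(s)=s/\sqrt{1+k_{sg}s^2}$ with a constant $k_{sg}>0$ (the bounded chemotactic gradient response). *)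

theory Defs
  imports "HOL-Analysis.Analysis"
begin

definition Pfun :: "real \<Rightarrow> real \<Rightarrow> real" where
  "Pfun \<beta> x = (if x \<ge> 1 then \<beta> * (x - 1) else 0)"

definition Hfun :: "real \<Rightarrow> real" where
  "Hfun u = (if u \<ge> 0 then u ^ 6 / (1 / 10 ^ 6 + u ^ 6) else 0)"

definition Phi :: "real \<Rightarrow> real \<Rightarrow> real" where
  "Phi ksg s = s / sqrt (1 + ksg * s ^ 2)"

definition Omega :: "(real \<Rightarrow> real) \<Rightarrow> real \<Rightarrow> real \<Rightarrow> (real \<times> real) set" where
  "Omega R L T = {(r, t). 0 \<le> t \<and> t < T \<and> R t \<le> r \<and> r \<le> L}"

definition Omega_int :: "(real \<Rightarrow> real) \<Rightarrow> real \<Rightarrow> real \<Rightarrow> (real \<times> real) set" where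
  "Omega_int R L T = {(r, t). 0 < t \<and> t < T \<and> R t < r \<and> r < L}"

definition C1_on :: "(real \<times> real) set \<Rightarrow> (real \<Rightarrow> real \<Rightarrow> real) \<Rightarrow>
    (real \<Rightarrow> real \<Rightarrow> real) \<Rightarrow> (real \<Rightarrow> real \<Rightarrow> real) \<Rightarrow> bool" where
  "C1_on S f fr ft \<longleftrightarrow>
     (\<forall>p\<in>S. ((\<lambda>q. f (fst q) (snd q)) has_derivative
                (\<lambda>h. fr (fst p) (snd p) * fst h + ft (fst p) (snd p) * snd h)) (at p within S))
     \<and> continuous_on S (\<lambda>q. fr (fst q) (snd q))
     \<and> continuous_on S (\<lambda>q. ft (fst q) (snd q))"

end

theory Submission
  imports Defs
begin


lemma C1_r:
  assumes "C1_on S f fr ft" "(r,t) \<in> S"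
  shows "((\<lambda>y. f y t) has_real_derivative fr r t) (at r within {y. (y,t) \<in> S})"
proof -
  have d: "\<And>p. p \<in> S \<Longrightarrow> ((\<lambda>q. f (fst q) (snd q)) has_derivative
                (\<lambda>h. fr (fst p) (snd p) * fst h + ft (fst p) (snd p) * snd h)) (at p within S)"
    using assms(1) unfolding C1_on_def by blast
  have p: "((\<lambda>y. (y,t)) has_derivative (\<lambda>h. (h,0))) (at r within {y. (y,t) \<in> S})"
    by (auto intro!: derivative_eq_intros)
  have "((\<lambda>x. (\<lambda>q. f (fst q) (snd q)) ((\<lambda>y. (y,t)) x)) has_derivative (\<lambda>y. (\<lambda>h. fr (fst (r,t)) (snd (r,t)) * fst h + ft (fst (r,t)) (snd (r,t)) * snd h) ((\<lambda>h. (h,0)) y))) (at r within {y. (y,t) \<in> S})"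
    by (rule has_derivative_in_compose2[OF d _ _ p]) (use assms(2) in auto)
  moreover have "(\<lambda>y::real. y * c) = (*) c" for c :: real by (auto simp: fun_eq_iff)
  ultimately show ?thesis by (simp add: has_field_derivative_def)
qed

lemma C1_t:
  assumes "C1_on S f fr ft" "(r,t) \<in> S"
  shows "((\<lambda>s. f r s) has_real_derivative ft r t) (at t within {s. (r,s) \<in> S})"
proof -
  have d: "\<And>p. p \<in> S \<Longrightarrow> ((\<lambda>q. f (fst q) (snd q)) has_derivative
                (\<lambda>h. fr (fst p) (snd p) * fst h + ft (fst p) (snd p) * snd h)) (at p within S)"
    using assms(1) unfolding C1_on_def by blast
  have p: "((\<lambda>s. (r,s)) has_derivative (\<lambda>h. (0,h))) (at t within {s. (r,s) \<in> S})"
    by (auto intro!: derivative_eq_intros)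
  have "((\<lambda>x. (\<lambda>q. f (fst q) (snd q)) ((\<lambda>s. (r,s)) x)) has_derivative (\<lambda>y. (\<lambda>h. fr (fst (r,t)) (snd (r,t)) * fst h + ft (fst (r,t)) (snd (r,t)) * snd h) ((\<lambda>h. (0,h)) y))) (at t within {s. (r,s) \<in> S})"
    by (rule has_derivative_in_compose2[OF d _ _ p]) (use assms(2) in auto)
  moreover have "(\<lambda>y::real. y * c) = (*) c" for c :: real by (auto simp: fun_eq_iff)
  ultimately show ?thesis by (simp add: has_field_derivative_def)
qed

lemma C1_cont:
  assumes "C1_on S f fr ft"
  shows "continuous_on S (\<lambda>q. f (fst q) (snd q))"
proof -
  have d: "\<And>p. p \<in> S \<Longrightarrow> ((\<lambda>q. f (fst q) (snd q)) has_derivative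
                (\<lambda>h. fr (fst p) (snd p) * fst h + ft (fst p) (snd p) * snd h)) (at p within S)"
    using assms(1) unfolding C1_on_def by blast
  show ?thesis unfolding continuous_on_eq_continuous_within
    using d has_derivative_continuous by blast
qed

lemma slice_cont:
  assumes "continuous_on S (\<lambda>q. f (fst q) (snd q))"
  shows "continuous_on {y. (y,t) \<in> S} (\<lambda>y. f y t)"
proof -
  have "continuous_on {y. (y,t) \<in> S} (\<lambda>y. (y,t))" by (intro continuous_intros)
  from continuous_on_compose2[OF assms this] show ?thesis by auto
qed

lemma Pfun_alt: "Pfun \<beta> x = \<beta> * max (x - 1) 0"
  by (simp add: Pfun_def max_def)

lemma Pfun_cont: "continuous_on S (\<lambda>y. Pfun \<beta> (f y))" if "continuous_on S f"
  unfolding Pfun_alt by (intro continuous_intros that)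

lemma Pfun_bounds: "\<beta> > 0 \<Longrightarrow> x < \<rho>m \<Longrightarrow> \<rho>m > 1 \<Longrightarrow> 0 \<le> Pfun \<beta> x \<and> Pfun \<beta> x \<le> \<beta> * (\<rho>m - 1)"
  unfolding Pfun_def by (auto intro: mult_left_mono)



lemma const_by_MVT:
  fixes w :: "real \<Rightarrow> real"
  assumes "a \<le> y" "y \<le> L" "continuous_on {a..L} w"
    "\<And>x. a < x \<Longrightarrow> x < L \<Longrightarrow> (w has_real_derivative 0) (at x)"
  shows "w y = w a"
proof (cases "a = y")
  case False
  then have ay: "a < y" using assms by auto
  have "continuous_on {a..y} w" using assms(3) by (rule continuous_on_subset) (use assms in auto)
  moreover have "\<And>x. a < x \<Longrightarrow> x < y \<Longrightarrow> w differentiable (at x)"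
    using assms(4) assms(2) real_differentiable_def by (meson less_le_trans)
  ultimately obtain l z where "a < z" "z < y" "DERIV w z :> l" "w y - w a = (y - a) * l"
    using MVT[OF ay] by blast
  moreover have "DERIV w z :> 0" using assms(4) \<open>a<z\<close> \<open>z<y\<close> assms(2) by auto
  ultimately have "l = 0" using DERIV_unique by blast
  with \<open>w y - w a = (y - a) * l\<close> show ?thesis by simp
qed simp

lemma c_bound:
  fixes v vr vrr P Pr :: "real \<Rightarrow> real" and a L B :: real
  assumes a: "0 < a" "a < L" and B: "0 \<le> B"
    and cv: "continuous_on {a..L} v" and cvr: "continuous_on {a..L} vr" and cP: "continuous_on {a..L} P"
    and dv: "\<And>y. a<y \<Longrightarrow> y<L \<Longrightarrow> (v has_real_derivative vr y) (at y)"
    and dvr: "\<And>y. a<y \<Longrightarrow> y<L \<Longrightarrow> (vr has_real_derivative vrr y) (at y)"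
    and dP: "\<And>y. a<y \<Longrightarrow> y<L \<Longrightarrow> (P has_real_derivative Pr y) (at y)"
    and eq: "\<And>y. a<y \<Longrightarrow> y<L \<Longrightarrow> vrr y + vr y / y - v y / y^2 = Pr y"
    and vL: "v L = 0" and va: "vr a = P a"
    and Pb: "\<And>y. a\<le>y \<Longrightarrow> y\<le>L \<Longrightarrow> 0 \<le> P y \<and> P y \<le> B"
    and y: "a < y" "y < L"
  shows "vr y + v y / y \<ge> -B"
proof -
  define c where "c = v a / a"
  define w where "w y = vr y + v y / y - P y" for y
  have wd: "(w has_real_derivative 0) (at x)" if x: "a < x" "x < L" for x
  proof -
    have x0: "x \<noteq> 0" using x a by auto
    have "(w has_real_derivative (vrr x + (vr x * x - v x * 1)/(x*x) - Pr x)) (at x)"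
      unfolding w_def using x0 x by (intro derivative_eq_intros) (auto intro: dv dvr dP)
    moreover have "vrr x + (vr x * x - v x * 1)/(x*x) - Pr x = vrr x + vr x / x - v x / x^2 - Pr x"
      using x0 by (simp add: field_simps power2_eq_square)
    ultimately show ?thesis using eq[OF x] by simp
  qed
  have wc: "continuous_on {a..L} w"
    unfolding w_def using a by (intro continuous_intros cv cvr cP) auto
  have wa: "w a = c" unfolding w_def c_def using va by simp
  have wy: "vr x + v x / x = P x + c" if "a < x" "x < L" for x
    using const_by_MVT[of a x L w, OF _ _ wc wd] that wa unfolding w_def by auto
  define h where "h x = x * v x - (B + c) * x^2 / 2" for x
  have hd: "(h has_real_derivative (v x + x * vr x - (B + c) * x)) (at x)" if "a < x" "x < L" for x
    unfolding h_def by (rule derivative_eq_intros dv that refl | simp)+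
  have hc: "continuous_on {a..L} h" unfolding h_def by (intro continuous_intros cv) auto
  have "\<And>x. a < x \<Longrightarrow> x < L \<Longrightarrow> h differentiable (at x)"
    using hd real_differentiable_def by blast
  then obtain l z where z: "a < z" "z < L" "DERIV h z :> l" "h L - h a = (L - a) * l"
    using MVT[OF a(2) hc] by blast
  then have "l = v z + z * vr z - (B + c) * z" using hd DERIV_unique by blast
  also have "\<dots> = z * (vr z + v z / z) - (B + c) * z" using z a by (simp add: field_simps)
  also have "\<dots> = z * (P z - B)" using wy[OF z(1,2)] by (simp add: algebra_simps)
  also have "\<dots> \<le> 0" using Pb[of z] z a by (simp add: mult_nonneg_nonpos)
  finally have "l \<le> 0" .
  then have "(L - a) * l \<le> 0" using a by (simp add: mult_nonneg_nonpos)
  then have "h L \<le> h a" using z(4) by simp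
  then have "- (B + c) * L^2 / 2 \<le> a * v a - (B + c) * a^2 / 2" 
  proof -
    have "h L = - (B + c) * L^2 / 2" unfolding h_def vL by (simp add: algebra_simps)
    moreover have "h a = a * v a - (B + c) * a^2 / 2" unfolding h_def by simp
    ultimately show ?thesis using \<open>h L \<le> h a\<close> by linarith
  qed
  moreover have "a * v a = c * a^2" unfolding c_def using a by (simp add: power2_eq_square)
  ultimately have key: "0 \<le> c * (L^2 + a^2) + B * (L^2 - a^2)" by (simp add: algebra_simps divide_simps)
  have "c \<ge> -B"
  proof (rule ccontr)
    assume "\<not> c \<ge> -B"
    then have "c < -B" by simp
    moreover have "L^2 + a^2 > 0" using a by (simp add: add_pos_pos)
    ultimately have "c * (L^2 + a^2) < -B * (L^2 + a^2)" using mult_strict_right_mono by blast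
    moreover have "B * a^2 \<ge> 0" using B by simp
    ultimately show False using key by (simp add: algebra_simps)
  qed
  then show ?thesis using wy[OF y] Pb[of y] y by simp
qed



lemma max_second_deriv:
  fixes f f' :: "real \<Rightarrow> real"
  assumes ax: "a < x" "x < b" and df: "\<And>y. a<y \<Longrightarrow> y<b \<Longrightarrow> (f has_real_derivative f' y) (at y)"
    and d2: "(f' has_real_derivative l) (at x)" and f0: "f' x = 0"
    and mx: "\<And>y. a<y \<Longrightarrow> y<b \<Longrightarrow> f y \<le> f x"
  shows "l \<le> 0"
proof (rule ccontr)
  assume "\<not> l \<le> 0"
  then have "l > 0" by simp
  from DERIV_pos_inc_right[OF d2 this] obtain d where d: "d > 0" "\<And>h. h > 0 \<Longrightarrow> h < d \<Longrightarrow> f' x < f' (x + h)"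
    by blast
  define h0 where "h0 = min d (b - x) / 2"
  have m: "min d (b-x) > 0" "min d (b-x) \<le> d" "min d (b-x) \<le> b - x" using d ax by auto
  have h01: "h0 > 0" using m unfolding h0_def by argo
  have h02: "h0 < d" using m unfolding h0_def by argo
  have h03: "x + h0 < b" using m unfolding h0_def by argo
  note h0 = h01 h02 h03
  have "continuous_on {x..x+h0} f"
  proof -
    have "\<forall>y\<in>{x..x+h0}. isCont f y" using df ax h0 by (meson DERIV_isCont less_le_trans le_less_trans atLeastAtMost_iff)
    then show ?thesis by (simp add: continuous_at_imp_continuous_on)
  qed
  moreover have "\<And>y. x < y \<Longrightarrow> y < x + h0 \<Longrightarrow> f differentiable (at y)"
    using df ax h0 real_differentiable_def by (meson less_trans)
  ultimately obtain l' z where z: "x < z" "z < x + h0" "DERIV f z :> l'" "f (x+h0) - f x = h0 * l'"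
    using MVT[of x "x+h0" f] h0 by auto
  have "DERIV f z :> f' z" using df z ax h0 by auto
  then have "l' = f' z" using z DERIV_unique by blast
  moreover have "f' z > 0" using d(2)[of "z - x"] z h0 f0 by auto
  ultimately have "h0 * l' > 0" using h01 by simp
  then have "f (x + h0) > f x" using z(4) by linarith
  moreover have "f (x + h0) \<le> f x" using mx ax h0 by auto
  ultimately show False by simp
qed

lemma final_arith:
  fixes nt Fr r knb b e kn n lamnb lamnn v vr nr Dn nrr B V \<delta> L Rmin N \<epsilon> nm :: real
  assumes pde: "nt + Fr / r = knb * b * (e / (1 + e)) + kn * n * (e / (1 + e)) - lamnb * n * b - lamnn * n^2"
    and Fr: "Fr = v * n + r * vr * n + r * v * nr - (Dn * nr + r * Dn * nrr)"
    and nt: "nt \<ge> 0" and cb: "vr + v / r \<ge> - B" and vV: "\<bar>v\<bar> \<le> V" and nrb: "\<bar>nr\<bar> \<le> 2 * \<delta> * L"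
    and nrr: "nrr \<le> 2 * \<delta>" and rR: "r \<ge> Rmin" "Rmin > 0" and be: "b \<ge> 0" "e \<ge> 0"
    and nb: "n \<ge> knb / lamnb" and nN: "n \<ge> N + \<epsilon> / 2" and N: "N \<ge> (kn + B) / lamnn"
    and nm: "n \<ge> nm" "nm > 0" and ep: "\<epsilon> > 0" and pos: "knb > 0" "kn > 0" "lamnb > 0" "lamnn > 0" "Dn > 0" "\<delta> > 0" "L > 0"
    and dl: "\<delta> * (2 * V * L + 2 * Dn * L / Rmin + 2 * Dn) < lamnn * \<epsilon> * nm / 2"
  shows False
proof -
  have r0: "r > 0" using rR by simp
  have n0: "n > 0" using nm by simp
  have Fr': "Fr / r = n * (vr + v / r) + v * nr - Dn * nr / r - Dn * nrr"
    using r0 unfolding Fr by (simp add: field_simps)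
  have E: "0 \<le> e / (1 + e)" "e / (1 + e) \<le> 1" using be by auto
  have t1: "knb * b * (e / (1 + e)) \<le> lamnb * n * b"
  proof -
    have "knb * b * (e / (1 + e)) \<le> knb * b" by (rule mult_left_le) (use E be pos in auto)
    moreover have "knb \<le> lamnb * n" using nb pos by (simp add: field_simps)
    then have "knb * b \<le> lamnb * n * b" using be by (simp add: mult_right_mono)
    ultimately show ?thesis by simp
  qed
  have t2: "kn * n * (e / (1 + e)) \<le> kn * n" by (rule mult_left_le) (use E n0 pos in auto)
  have t3: "- (n * (vr + v / r)) \<le> n * B"
  proof -
    have "n * (-B) \<le> n * (vr + v / r)" using cb n0 by (intro mult_left_mono) auto
    then show ?thesis by simp
  qed
  have t4: "- (v * nr) \<le> V * (2 * \<delta> * L)"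
  proof -
    have "\<bar>v * nr\<bar> \<le> V * (2 * \<delta> * L)" unfolding abs_mult using vV nrb by (simp add: mult_mono)
    then show ?thesis by linarith
  qed
  have t5: "Dn * nr / r \<le> Dn * (2 * \<delta> * L) / Rmin"
  proof -
    have "nr / r \<le> \<bar>nr\<bar> / r" using r0 by (simp add: divide_right_mono)
    also have "\<dots> \<le> (2 * \<delta> * L) / r" using nrb r0 by (simp add: divide_right_mono)
    also have "\<dots> \<le> (2 * \<delta> * L) / Rmin" using rR pos by (simp add: frac_le)
    finally have "Dn * (nr / r) \<le> Dn * (2 * \<delta> * L / Rmin)" using pos by (intro mult_left_mono) auto
    then show ?thesis by simp
  qed
  have t6: "Dn * nrr \<le> Dn * (2 * \<delta>)" using nrr pos by simp
  have t7: "n * (kn + B - lamnn * n) \<le> - (lamnn * \<epsilon> * nm / 2)"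
  proof -
    have "kn + B \<le> lamnn * N" using N pos by (simp add: field_simps)
    moreover have "lamnn * (N + \<epsilon> / 2) \<le> lamnn * n" using nN pos by (intro mult_left_mono) auto
    ultimately have "kn + B - lamnn * n \<le> - (lamnn * \<epsilon> / 2)" by (simp add: algebra_simps)
    then have "n * (kn + B - lamnn * n) \<le> n * (- (lamnn * \<epsilon> / 2))" by (rule mult_left_mono) (use n0 in auto)
    also have "\<dots> \<le> nm * (- (lamnn * \<epsilon> / 2))"
      by (rule mult_right_mono_neg) (use nm pos \<open>\<epsilon> > 0\<close> in auto)
    finally show ?thesis by (simp add: algebra_simps)
  qed
  have "nt = knb * b * (e / (1 + e)) + kn * n * (e / (1 + e)) - lamnb * n * b - lamnn * n^2
      - n * (vr + v / r) - v * nr + Dn * nr / r + Dn * nrr" using pde Fr' by simp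
  also have "\<dots> \<le> n * (kn + B - lamnn * n) + \<delta> * (2 * V * L + 2 * Dn * L / Rmin + 2 * Dn)"
  proof -
    have e1: "n*(kn+B-lamnn*n) = kn*n + n*B - lamnn*n^2" by (simp add: algebra_simps power2_eq_square)
    have e2: "\<delta>*(2*V*L + 2*Dn*L/Rmin + 2*Dn) = V*(2*\<delta>*L) + Dn*(2*\<delta>*L)/Rmin + Dn*(2*\<delta>)"
      by (simp add: algebra_simps)
    show ?thesis unfolding e1 e2 using t1 t2 t3 t4 t5 t6 by linarith
  qed
  finally have "nt < 0" using t7 dl by linarith
  then show False using nt by simp
qed


theorem lemma4p5:
  fixes L R0 \<beta> T \<rho>m :: real
    and R :: "real \<Rightarrow> real"
    and \<rho> \<rho>r \<rho>t v vr vrr Pr b e er err n nr nt nrr Fr :: "real \<Rightarrow> real \<Rightarrow> real"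
    and \<gamma> Dn \<chi>n nm knb kn lamnb lamnn ksg :: real
  defines "\<Omega> \<equiv> Omega R L T"
  defines "\<Omega>i \<equiv> Omega_int R L T"
  assumes L_pos: "L > 0" and R0: "0 < R0" "R0 < L" and \<beta>_pos: "\<beta> > 0" and T_pos: "T > 0"
  \<comment> \<open>free boundary R in C^1([0,T)), R(0)=R0, 0<R(t)<L, dR/dt = v(R(t),t)\<close>
    and R_init: "R 0 = R0"
    and R_bounds: "\<And>t. 0 \<le> t \<Longrightarrow> t < T \<Longrightarrow> 0 < R t \<and> R t < L"
    and R_deriv: "\<And>t. 0 \<le> t \<Longrightarrow> t < T \<Longrightarrow>
        (R has_real_derivative v (R t) t) (at t within {0..<T})"
    and R_C1: "continuous_on {0..<T} (\<lambda>t. v (R t) t)"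
  \<comment> \<open>matrix density rho: classical, 0 <= rho < rho_m, rho_m > 1\<close>
    and \<rho>m_gt: "\<rho>m > 1"
    and \<rho>_C1: "C1_on \<Omega> \<rho> \<rho>r \<rho>t"
    and \<rho>_bounds: "\<And>r t. (r, t) \<in> \<Omega> \<Longrightarrow> 0 \<le> \<rho> r t \<and> \<rho> r t < \<rho>m"
  \<comment> \<open>velocity v: classical, twice continuously differentiable in r\<close>
    and v_cont: "continuous_on \<Omega> (\<lambda>q. v (fst q) (snd q))"
    and v_r: "\<And>r t. (r, t) \<in> \<Omega> \<Longrightarrow>
        ((\<lambda>y. v y t) has_real_derivative vr r t) (at r within {R t..L})"
    and v_rr: "\<And>r t. (r, t) \<in> \<Omega> \<Longrightarrow>
        ((\<lambda>y. vr y t) has_real_derivative vrr r t) (at r within {R t..L})"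
    and vr_cont: "continuous_on \<Omega> (\<lambda>q. vr (fst q) (snd q))"
    and vrr_cont: "continuous_on \<Omega> (\<lambda>q. vrr (fst q) (snd q))"
    and P_r: "\<And>r t. 0 \<le> t \<Longrightarrow> t < T \<Longrightarrow> R t < r \<Longrightarrow> r < L \<Longrightarrow>
        ((\<lambda>y. Pfun \<beta> (\<rho> y t)) has_real_derivative Pr r t) (at r)"
    and v_eq: "\<And>r t. 0 \<le> t \<Longrightarrow> t < T \<Longrightarrow> R t < r \<Longrightarrow> r < L \<Longrightarrow>
        vrr r t + vr r t / r - v r t / r ^ 2 = Pr r t"
    and v_bc_L: "\<And>t. 0 \<le> t \<Longrightarrow> t < T \<Longrightarrow> v L t = 0"
    and v_bc_R: "\<And>t. 0 \<le> t \<Longrightarrow> t < T \<Longrightarrow> vr (R t) t = Pfun \<beta> (\<rho> (R t) t)"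
  \<comment> \<open>b, e: given nonnegative continuous functions; e twice differentiable in r\<close>
    and b_cont: "continuous_on \<Omega> (\<lambda>q. b (fst q) (snd q))"
    and b_nonneg: "\<And>r t. (r, t) \<in> \<Omega> \<Longrightarrow> b r t \<ge> 0"
    and e_cont: "continuous_on \<Omega> (\<lambda>q. e (fst q) (snd q))"
    and e_nonneg: "\<And>r t. (r, t) \<in> \<Omega> \<Longrightarrow> e r t \<ge> 0"
    and e_r: "\<And>r t. (r, t) \<in> \<Omega> \<Longrightarrow>
        ((\<lambda>y. e y t) has_real_derivative er r t) (at r within {R t..L})"
    and er_cont: "continuous_on \<Omega> (\<lambda>q. er (fst q) (snd q))"
    and e_rr: "\<And>r t. (r, t) \<in> \<Omega>i \<Longrightarrow>
        ((\<lambda>y. er y t) has_real_derivative err r t) (at r)"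
    and err_cont: "continuous_on \<Omega>i (\<lambda>q. err (fst q) (snd q))"
  \<comment> \<open>parameters\<close>
    and \<gamma>_range: "0 \<le> \<gamma>" "\<gamma> \<le> 1"
    and consts_pos: "Dn > 0" "\<chi>n > 0" "nm > 0" "knb > 0" "kn > 0" "lamnb > 0" "lamnn > 0" "ksg > 0"
  \<comment> \<open>n: nonnegative classical solution\<close>
    and n_C1: "C1_on \<Omega> n nr nt"
    and n_rr: "\<And>r t. (r, t) \<in> \<Omega>i \<Longrightarrow>
        ((\<lambda>y. nr y t) has_real_derivative nrr r t) (at r)"
    and nrr_cont: "continuous_on \<Omega>i (\<lambda>q. nrr (fst q) (snd q))"
    and n_nonneg: "\<And>r t. (r, t) \<in> \<Omega> \<Longrightarrow> n r t \<ge> 0"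
    and flux_r: "\<And>r t. (r, t) \<in> \<Omega>i \<Longrightarrow>
        ((\<lambda>y. y * v y t * n y t - y * Dn * nr y t
              + y * \<chi>n * \<rho> y t * n y t * Hfun (1 - n y t / nm) * Phi ksg (er y t))
           has_real_derivative Fr r t) (at r)"
    and n_pde: "\<And>r t. (r, t) \<in> \<Omega>i \<Longrightarrow>
        nt r t + Fr r t / r
          = knb * b r t * (e r t / (1 + e r t)) + kn * n r t * (e r t / (1 + e r t))
            - lamnb * n r t * b r t - lamnn * (n r t) ^ 2"
    and n_bc_L: "\<And>t. 0 < t \<Longrightarrow> t < T \<Longrightarrow>
        (1 - \<gamma>) * n L t + \<gamma> * L * (nr L t
           - \<chi>n / Dn * \<rho> L t * n L t * Hfun (1 - n L t / nm) * Phi ksg (er L t)) = 0"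
    and n_bc_R: "\<And>t. 0 < t \<Longrightarrow> t < T \<Longrightarrow> nr (R t) t = 0"
    and n_init: "\<And>r. R0 \<le> r \<Longrightarrow> r \<le> L \<Longrightarrow> n r 0 = 0"
  shows "\<forall>(r, t) \<in> \<Omega>. 0 \<le> n r t \<and>
           n r t \<le> max (knb / lamnb) (max ((kn + \<beta> * (\<rho>m - 1)) / lamnn) nm)"
proof -
  define B where "B = \<beta> * (\<rho>m - 1)"
  define N where "N = max (knb / lamnb) (max ((kn + \<beta> * (\<rho>m - 1)) / lamnn) nm)"
  have Bpos: "B > 0" unfolding B_def using \<beta>_pos \<rho>m_gt by simp
  have NB: "N \<ge> knb/lamnb" "N \<ge> (kn + B)/lamnn" "N \<ge> nm" unfolding N_def B_def by auto
  have Npos: "N > 0" using NB consts_pos by linarith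
  have Om: "\<And>r t. (r,t) \<in> \<Omega> \<longleftrightarrow> 0 \<le> t \<and> t < T \<and> R t \<le> r \<and> r \<le> L"
    by (simp add: \<Omega>_def Omega_def)
  have Omi: "\<And>r t. (r,t) \<in> \<Omega>i \<longleftrightarrow> 0 < t \<and> t < T \<and> R t < r \<and> r < L"
    by (simp add: \<Omega>i_def Omega_int_def)
  have slice: "\<And>t. 0 \<le> t \<Longrightarrow> t < T \<Longrightarrow> {y. (y,t) \<in> \<Omega>} = {R t..L}" by (auto simp: Om)
  have Rc: "continuous_on {0..<T} R"
    unfolding continuous_on_eq_continuous_within
  proof
    fix x assume "x \<in> {0..<T}"
    then show "continuous (at x within {0..<T}) R" using DERIV_continuous[OF R_deriv[of x]] by auto
  qed
  have ncont: "continuous_on \<Omega> (\<lambda>q. n (fst q) (snd q))" by (rule C1_cont[OF n_C1])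
  have rhocont: "continuous_on \<Omega> (\<lambda>q. \<rho> (fst q) (snd q))" by (rule C1_cont[OF \<rho>_C1])
  have main: "n r0 t0 \<le> N" if r0t0: "(r0,t0) \<in> \<Omega>" for r0 t0
  proof (rule field_le_epsilon)
    fix \<epsilon> :: real assume \<epsilon>: "0 < \<epsilon>"
    define t1 where "t1 = t0"
    have t1: "0 \<le> t1" "t1 < T" using r0t0 unfolding t1_def Om by auto
    have Rc1: "continuous_on {0..t1} R" using Rc by (rule continuous_on_subset) (use t1 in auto)
    obtain tmin where tmin: "tmin \<in> {0..t1}" "\<forall>s\<in>{0..t1}. R tmin \<le> R s"
      using continuous_attains_inf[OF compact_Icc _ Rc1] t1 by auto
    obtain tmax where tmax: "tmax \<in> {0..t1}" "\<forall>s\<in>{0..t1}. R s \<le> R tmax"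
      using continuous_attains_sup[OF compact_Icc _ Rc1] t1 by auto
    define Rmin where "Rmin = R tmin"
    define Rmax where "Rmax = R tmax"
    have Rmin: "Rmin > 0" "\<And>s. 0 \<le> s \<Longrightarrow> s \<le> t1 \<Longrightarrow> Rmin \<le> R s"
      using tmin R_bounds t1 unfolding Rmin_def by auto
    have Rmax: "Rmax < L" "\<And>s. 0 \<le> s \<Longrightarrow> s \<le> t1 \<Longrightarrow> R s \<le> Rmax"
      using tmax R_bounds t1 unfolding Rmax_def by auto
    define m where "m = (Rmax + L) / 2"
    have m: "0 < m" "m < L" "\<And>s. 0 \<le> s \<Longrightarrow> s \<le> t1 \<Longrightarrow> R s < m"
      using Rmin Rmax t1 unfolding m_def by (auto simp: field_simps) (smt (verit))+
    define K where "K = {(r,t). 0 \<le> t \<and> t \<le> t1 \<and> R t \<le> r \<and> r \<le> L}"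
    have KO: "K \<subseteq> \<Omega>" unfolding K_def using t1 by (auto simp: Om)
    have r0K: "(r0,t0) \<in> K" using r0t0 unfolding K_def Om t1_def by auto
    have K_eq: "K = ({0..L} \<times> {0..t1}) \<inter> (\<lambda>q. R (snd q) - fst q) -` {..0}"
    proof -
      have "\<And>r t. 0 \<le> t \<Longrightarrow> t \<le> t1 \<Longrightarrow> R t \<le> r \<Longrightarrow> 0 \<le> r"
        using R_bounds t1 by (smt (verit))
      then show ?thesis unfolding K_def by auto
    qed
    have compK: "compact K"
    proof -
      have c1: "continuous_on ({0..L} \<times> {0..t1}) (\<lambda>q. R (snd q))"
        by (rule continuous_on_compose2[OF Rc1 continuous_on_snd]) auto
      have c2: "continuous_on ({0..L} \<times> {0..t1}) (\<lambda>q. R (snd q) - fst q)"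
        by (intro continuous_intros c1)
      have "closed (({0..L} \<times> {0..t1}) \<inter> (\<lambda>q. R (snd q) - fst q) -` {..0})"
        by (rule continuous_closed_preimage[OF c2]) (auto intro: closed_Times)
      from compact_Int_closed[OF compact_Times[OF compact_Icc[of 0 L] compact_Icc[of 0 t1]] this]
      show ?thesis unfolding K_eq by (simp add: Int_assoc[symmetric])
    qed
    have vcK: "continuous_on K (\<lambda>q. \<bar>v (fst q) (snd q)\<bar>)"
      by (intro continuous_intros continuous_on_subset[OF v_cont KO])
    obtain qV where qV: "qV \<in> K" "\<forall>q\<in>K. \<bar>v (fst q) (snd q)\<bar> \<le> \<bar>v (fst qV) (snd qV)\<bar>"
      using continuous_attains_sup[OF compK _ vcK] r0K by blast
    define V where "V = \<bar>v (fst qV) (snd qV)\<bar>"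
    have V: "V \<ge> 0" "\<And>r t. (r,t) \<in> K \<Longrightarrow> \<bar>v r t\<bar> \<le> V" using qV unfolding V_def by auto
    define C0 where "C0 = 2 * V * L + 2 * Dn * L / Rmin + 2 * Dn"
    have C0: "C0 > 0" unfolding C0_def using V Rmin consts_pos L_pos by (simp add: add_nonneg_pos)
    define \<eta> where "\<eta> = lamnn * \<epsilon> * nm / 2"
    have \<eta>: "\<eta> > 0" unfolding \<eta>_def using consts_pos \<epsilon> by simp
    define \<delta> where "\<delta> = min (\<epsilon> / (2 * L^2)) (\<eta> / (2 * C0))"
    have \<delta>: "\<delta> > 0" unfolding \<delta>_def using \<epsilon> \<eta> C0 L_pos by simp
    have \<delta>L: "\<delta> * L^2 \<le> \<epsilon> / 2"
    proof -
      have "\<delta> * L^2 \<le> (\<epsilon> / (2 * L^2)) * L^2" unfolding \<delta>_def by (rule mult_right_mono) auto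
      then show ?thesis using L_pos by simp
    qed
    have \<delta>C: "\<delta> * C0 < \<eta>"
    proof -
      have "\<delta> * C0 \<le> (\<eta> / (2 * C0)) * C0" unfolding \<delta>_def using C0 by (intro mult_right_mono) auto
      then show ?thesis using C0 \<eta> by simp
    qed
    define g where "g y = L^2 - (y - m)^2" for y
    have g: "0 \<le> g y \<and> g y \<le> L^2" if "0 \<le> y" "y \<le> L" for y
    proof -
      have "\<bar>y - m\<bar> \<le> \<bar>L\<bar>" using that m L_pos by auto
      then have "(y - m)^2 \<le> L^2" by (simp add: abs_le_square_iff)
      then show ?thesis unfolding g_def by simp
    qed
    have gd: "(g has_real_derivative (-2 * (y - m))) (at y within S)" for y S
      unfolding g_def by (auto intro!: derivative_eq_intros simp: algebra_simps)
    define z where "z y t = n y t + \<delta> * g y" for y t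
    define M where "M = N + \<epsilon>"
    define A where "A = {q \<in> K. z (fst q) (snd q) \<ge> M}"
    show "n r0 t0 \<le> N + \<epsilon>"
    proof (cases "A = {}")
      case True
      then have "z r0 t0 < M" using r0K unfolding A_def by force
      moreover have "g r0 \<ge> 0" using g[of r0] r0t0 R_bounds unfolding Om by (smt (verit))
      ultimately show ?thesis unfolding z_def M_def using \<delta> by (smt (verit) mult_nonneg_nonneg)
    next
      case False
      have zcK: "continuous_on K (\<lambda>q. z (fst q) (snd q))"
        unfolding z_def g_def by (intro continuous_intros continuous_on_subset[OF ncont KO])
      have A_eq: "A = K \<inter> (\<lambda>q. z (fst q) (snd q)) -` {M..}" unfolding A_def by auto
      have "closed A" unfolding A_eq
        by (rule continuous_closed_preimage[OF zcK compact_imp_closed[OF compK]]) auto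
      then have compA: "compact A" using compact_Int_closed[OF compK] A_eq by (metis Int_absorb1 Int_lower1)
      obtain q1 where q1: "q1 \<in> A" "\<forall>q\<in>A. snd q1 \<le> snd q"
      proof -
        have "continuous_on A (\<lambda>q. snd q)" by (intro continuous_intros)
        from continuous_attains_inf[OF compA False this] show ?thesis using that by blast
      qed
      obtain r1 ts where q1eq: "q1 = (r1, ts)" by (cases q1)
      have early: "z r s < M" if "(r,s) \<in> K" "s < ts" for r s
        using q1(2) that unfolding A_def q1eq by force
      have ts: "0 \<le> ts" "ts \<le> t1" "R ts \<le> r1" "r1 \<le> L" "z r1 ts \<ge> M"
        using q1(1) unfolding A_def K_def q1eq by auto
      have tsT: "ts < T" using ts t1 by simp
      have RtsL: "R ts < L" using R_bounds ts tsT by auto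
      have zdw: "((\<lambda>y. z y ts) has_real_derivative (nr y ts + \<delta> * (-2 * (y - m)))) (at y within {R ts..L})"
        if "y \<in> {R ts..L}" for y
      proof -
        have "(y,ts) \<in> \<Omega>" using that ts tsT by (simp add: Om)
        from C1_r[OF n_C1 this] have "((\<lambda>y. n y ts) has_real_derivative nr y ts) (at y within {R ts..L})"
          using slice[OF ts(1) tsT] by simp
        then show ?thesis unfolding z_def
          by (intro DERIV_add DERIV_cmult gd) auto
      qed
      have zsc: "continuous_on {R ts..L} (\<lambda>y. z y ts)"
        unfolding continuous_on_eq_continuous_within using zdw DERIV_continuous by blast
      obtain rs where rs: "rs \<in> {R ts..L}" "\<forall>y\<in>{R ts..L}. z y ts \<le> z rs ts"
        using continuous_attains_sup[OF compact_Icc _ zsc] RtsL by auto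
      have zrs: "z rs ts \<ge> M"
      proof -
        have "z r1 ts \<le> z rs ts" using rs(2) ts(3,4) by simp
        then show ?thesis using ts(5) by linarith
      qed
      have rs0: "rs > 0" "rs \<ge> Rmin" using rs R_bounds[of ts] ts tsT Rmin(2)[of ts] by auto
      have gb: "0 \<le> g rs" "g rs \<le> L^2" using g[of rs] rs0 rs by auto
      have ts_pos: "ts > 0"
      proof (rule ccontr)
        assume "\<not> ts > 0"
        then have "ts = 0" using ts by simp
        then have "n rs ts = 0" using n_init rs R_init by auto
        then have "z rs ts \<le> \<epsilon> / 2" unfolding z_def using gb \<delta> \<delta>L
          by (smt (verit) mult_left_mono)
        then show False using zrs Npos \<epsilon> unfolding M_def by simp
      qed
      have nrs: "n rs ts \<ge> N + \<epsilon> / 2"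
      proof -
        have "\<delta> * g rs \<le> \<delta> * L^2" using gb \<delta> by (simp add: mult_left_mono)
        then show ?thesis using zrs \<delta>L unfolding z_def M_def by simp
      qed
      have nrs2: "n rs ts > nm" "n rs ts > 0" "n rs ts \<ge> knb / lamnb" "n rs ts \<ge> nm"
        using nrs NB \<epsilon> Npos by auto
      have Hz: "Hfun (1 - n y ts / nm) = 0" if "n y ts > nm" for y
      proof -
        have "n y ts / nm > 1" using that consts_pos by simp
        then show ?thesis unfolding Hfun_def by simp
      qed
      have Rm: "R ts < m" using m(3) ts by simp
      consider (left) "rs = R ts" | (right) "rs = L" | (inner) "R ts < rs" "rs < L" using rs(1) by fastforce
      then show ?thesis
      proof cases
        case left
        have "nr (R ts) ts = 0" using n_bc_R ts_pos tsT by simp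
        then have dl: "((\<lambda>y. z y ts) has_real_derivative (\<delta> * (-2 * (R ts - m)))) (at (R ts) within {R ts..L})"
          using zdw[of "R ts"] RtsL by simp
        have "\<delta> * (-2 * (R ts - m)) > 0" using \<delta> Rm by (simp add: mult_pos_pos)
        from has_real_derivative_pos_inc_right[OF dl this] obtain d where
          d: "d > 0" "\<And>h. h > 0 \<Longrightarrow> R ts + h \<in> {R ts..L} \<Longrightarrow> h < d \<Longrightarrow> z (R ts) ts < z (R ts + h) ts" by blast
        define h where "h = min d (L - R ts) / 2"
        have hm: "min d (L - R ts) > 0" "min d (L - R ts) \<le> d" "min d (L - R ts) \<le> L - R ts" using d RtsL by auto
        have h1: "h > 0" "h < d" "h \<le> L - R ts" using hm unfolding h_def by (argo, argo, argo)
        then have h: "h > 0" "h < d" "R ts + h \<in> {R ts..L}" by auto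
        have "z (R ts) ts < z (R ts + h) ts" using d(2)[OF h(1) h(3) h(2)] .
        moreover have "z (R ts + h) ts \<le> z rs ts" using rs(2) h(3) by blast
        ultimately show ?thesis using left by simp
      next
        case right
        have bc: "(1 - \<gamma>) * n L ts + \<gamma> * L * nr L ts = 0"
          using n_bc_L[OF ts_pos tsT] Hz[of L] nrs2 right by simp
        have nrL: "nr L ts \<le> 0"
        proof (cases "\<gamma> = 0")
          case True
          then show ?thesis using bc nrs2 right by simp
        next
          case False
          then have gp: "\<gamma> * L > 0" using \<gamma>_range L_pos by simp
          have "(1 - \<gamma>) * n L ts \<ge> 0" using \<gamma>_range nrs2 right by simp
          then have "(\<gamma> * L) * nr L ts \<le> 0" using bc by simp
          then show ?thesis using gp by (metis mult_le_0_iff not_le)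
        qed
        have dl: "((\<lambda>y. z y ts) has_real_derivative (nr L ts + \<delta> * (-2 * (L - m)))) (at L within {R ts..L})"
          using zdw[of L] RtsL by simp
        have "\<delta> * (2 * (L - m)) > 0" using \<delta> m by simp
        moreover have "\<delta> * (-2 * (L - m)) = - (\<delta> * (2 * (L - m)))" by (simp add: algebra_simps)
        ultimately have "nr L ts + \<delta> * (-2 * (L - m)) < 0" using nrL by linarith
        from has_real_derivative_neg_dec_left[OF dl this] obtain d where
          d: "d > 0" "\<And>h. h > 0 \<Longrightarrow> L - h \<in> {R ts..L} \<Longrightarrow> h < d \<Longrightarrow> z L ts < z (L - h) ts" by blast
        define h where "h = min d (L - R ts) / 2"
        have hm: "min d (L - R ts) > 0" "min d (L - R ts) \<le> d" "min d (L - R ts) \<le> L - R ts" using d RtsL by auto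
        have h1: "h > 0" "h < d" "h \<le> L - R ts" using hm unfolding h_def by (argo, argo, argo)
        then have h: "h > 0" "h < d" "L - h \<in> {R ts..L}" by auto
        have "z L ts < z (L - h) ts" using d(2)[OF h(1) h(3) h(2)] .
        moreover have "z (L - h) ts \<le> z rs ts" using rs(2) h(3) by blast
        ultimately show ?thesis using right by simp
      next
        case inner
        have inOi: "(rs, ts) \<in> \<Omega>i" using inner ts_pos tsT by (simp add: Omi)
        have inO: "(rs, ts) \<in> \<Omega>" using inner ts tsT by (simp add: Om)
        have inK: "(rs, ts) \<in> K" using inner ts unfolding K_def by simp
        have atw: "at y within {R ts..L} = at y" if "R ts < y" "y < L" for y
          by (rule at_within_Icc_at[OF that])
        have zd: "((\<lambda>y. z y ts) has_real_derivative (nr y ts + \<delta> * (-2 * (y - m)))) (at y)"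
          if "R ts < y" "y < L" for y
          using zdw[of y] atw[OF that] that by simp
        have z0: "nr rs ts + \<delta> * (-2 * (rs - m)) = 0"
        proof (rule DERIV_local_max[OF zd[OF inner]])
          show "0 < min (rs - R ts) (L - rs)" using inner by simp
          show "\<forall>y. \<bar>rs - y\<bar> < min (rs - R ts) (L - rs) \<longrightarrow> z y ts \<le> z rs ts"
          proof (intro allI impI)
            fix y assume "\<bar>rs - y\<bar> < min (rs - R ts) (L - rs)"
            then have "y \<in> {R ts..L}" by (auto simp: abs_less_iff)
            then show "z y ts \<le> z rs ts" using rs(2) by blast
          qed
        qed
        have nrv: "nr rs ts = 2 * \<delta> * (rs - m)" using z0 by (simp add: algebra_simps)
        have nrb: "\<bar>nr rs ts\<bar> \<le> 2 * \<delta> * L"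
        proof -
          have "\<bar>rs - m\<bar> \<le> L" using inner m rs0 by auto
          then have "2 * \<delta> * \<bar>rs - m\<bar> \<le> 2 * \<delta> * L" using \<delta> by (simp add: mult_left_mono)
          then show ?thesis unfolding nrv using \<delta> by (simp add: abs_mult)
        qed
        have dlin: "((\<lambda>y. \<delta> * (-2 * (y - m))) has_real_derivative \<delta> * (-2)) (at rs)"
          by (auto intro!: derivative_eq_intros)
        have d2: "((\<lambda>y. nr y ts + \<delta> * (-2 * (y - m))) has_real_derivative (nrr rs ts + \<delta> * (-2))) (at rs)"
          using DERIV_add[OF n_rr[OF inOi] dlin] by simp
        have "nrr rs ts + \<delta> * (-2) \<le> 0"
          by (rule max_second_deriv[OF inner zd d2 z0]) (use rs(2) in auto)
        then have nrrb: "nrr rs ts \<le> 2 * \<delta>" by simp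
        have dt: "((\<lambda>s. n rs s) has_real_derivative nt rs ts) (at ts within {s. (rs,s) \<in> \<Omega>})"
          by (rule C1_t[OF n_C1 inO])
        have ntpos: "nt rs ts \<ge> 0"
        proof (rule ccontr)
          assume "\<not> nt rs ts \<ge> 0"
          then have "nt rs ts < 0" by simp
          from has_real_derivative_neg_dec_left[OF dt this] obtain d where
            d: "d > 0" "\<And>h. h > 0 \<Longrightarrow> ts - h \<in> {s. (rs,s) \<in> \<Omega>} \<Longrightarrow> h < d \<Longrightarrow> n rs ts < n rs (ts - h)"
            by blast
          have tsI: "ts \<in> {0..t1}" using ts by simp
          have "\<exists>d2>0. \<forall>s\<in>{0..t1}. dist s ts < d2 \<longrightarrow> dist (R s) (R ts) < rs - R ts"
            using Rc1 tsI inner unfolding continuous_on_iff by simp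
          then obtain d2 where d2: "d2 > 0" "\<And>s. s \<in> {0..t1} \<Longrightarrow> dist s ts < d2 \<Longrightarrow> dist (R s) (R ts) < rs - R ts"
            by blast
          define h where "h = min (min d d2) ts / 2"
          have hm: "min (min d d2) ts > 0" "min (min d d2) ts \<le> d" "min (min d d2) ts \<le> d2" "min (min d d2) ts \<le> ts"
            using d d2 ts_pos by auto
          have h1: "h > 0" "h < d" "h < d2" "h < ts" using hm unfolding h_def by (argo, argo, argo, argo)
          have s: "ts - h \<in> {0..t1}" "ts - h < ts" using h1 ts by auto
          have "dist (R (ts - h)) (R ts) < rs - R ts" using d2(2)[OF s(1)] h1 by (simp add: dist_real_def)
          then have Rless: "R (ts - h) < rs" by (simp add: dist_real_def abs_less_iff)
          have inK2: "(rs, ts - h) \<in> K" using s Rless inner unfolding K_def by auto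
          have "z rs (ts - h) < M" by (rule early[OF inK2 s(2)])
          then have "n rs (ts - h) < n rs ts" using zrs unfolding z_def by simp
          moreover have "n rs ts < n rs (ts - h)" by (rule d(2)) (use h1 inK2 KO in auto)
          ultimately show False by simp
        qed
        have ncs: "continuous_on {R ts..L} (\<lambda>y. n y ts)"
          using slice_cont[OF ncont, of ts] slice[OF ts(1) tsT] by simp
        define U where "U = {R ts<..<L} \<inter> (\<lambda>y. n y ts) -` {nm<..}"
        have openU: "open U" unfolding U_def
          by (rule continuous_open_preimage) (auto intro: continuous_on_subset[OF ncs])
        have rsU: "rs \<in> U" using inner nrs2 unfolding U_def by auto
        have dv: "((\<lambda>y. v y ts) has_real_derivative vr rs ts) (at rs)" using v_r[OF inO] atw[OF inner] by simp
        have dn: "((\<lambda>y. n y ts) has_real_derivative nr rs ts) (at rs)"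
          using C1_r[OF n_C1 inO] slice[OF ts(1) tsT] atw[OF inner] by simp
        have dnr: "((\<lambda>y. nr y ts) has_real_derivative nrr rs ts) (at rs)" by (rule n_rr[OF inOi])
        define G where "G y = y * v y ts * n y ts - y * Dn * nr y ts" for y
        define E where "E = v rs ts * n rs ts + rs * vr rs ts * n rs ts + rs * v rs ts * nr rs ts - (Dn * nr rs ts + rs * Dn * nrr rs ts)"
        have dG: "(G has_real_derivative E) (at rs)"
          unfolding G_def E_def by (auto intro!: derivative_eq_intros dv dn dnr simp: algebra_simps)
        have "((\<lambda>y. y * v y ts * n y ts - y * Dn * nr y ts
              + y * \<chi>n * \<rho> y ts * n y ts * Hfun (1 - n y ts / nm) * Phi ksg (er y ts)) has_real_derivative E) (at rs)"
          by (rule has_field_derivative_transform_within_open[OF dG openU rsU]) (auto simp: G_def U_def Hz)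
        with flux_r[OF inOi] have FrE: "Fr rs ts = E" using DERIV_unique by blast
        have cb: "vr rs ts + v rs ts / rs \<ge> -B"
        proof (rule c_bound[where v="\<lambda>y. v y ts" and vr="\<lambda>y. vr y ts" and vrr="\<lambda>y. vrr y ts"
              and P="\<lambda>y. Pfun \<beta> (\<rho> y ts)" and Pr="\<lambda>y. Pr y ts" and a="R ts" and L=L and B=B])
          show "0 < R ts" using R_bounds ts tsT by auto
          show "R ts < L" by (rule RtsL)
          show "0 \<le> B" using Bpos by simp
          show "continuous_on {R ts..L} (\<lambda>y. v y ts)"
            using slice_cont[OF v_cont, of ts] slice[OF ts(1) tsT] by simp
          show "continuous_on {R ts..L} (\<lambda>y. vr y ts)"
            using slice_cont[OF vr_cont, of ts] slice[OF ts(1) tsT] by simp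
          show "continuous_on {R ts..L} (\<lambda>y. Pfun \<beta> (\<rho> y ts))"
            using Pfun_cont[OF slice_cont[OF rhocont, of ts]] slice[OF ts(1) tsT] by simp
          fix y assume y: "R ts < y" "y < L"
          have yO: "(y, ts) \<in> \<Omega>" using y ts tsT by (simp add: Om)
          show "((\<lambda>y. v y ts) has_real_derivative vr y ts) (at y)" using v_r[OF yO] atw[OF y] by simp
          show "((\<lambda>y. vr y ts) has_real_derivative vrr y ts) (at y)" using v_rr[OF yO] atw[OF y] by simp
          show "((\<lambda>y. Pfun \<beta> (\<rho> y ts)) has_real_derivative Pr y ts) (at y)" using P_r[OF ts(1) tsT y] .
          show "vrr y ts + vr y ts / y - v y ts / y^2 = Pr y ts" using v_eq[OF ts(1) tsT y] .
        next
          show "v L ts = 0" using v_bc_L ts tsT by simp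
          show "vr (R ts) ts = Pfun \<beta> (\<rho> (R ts) ts)" using v_bc_R ts tsT by simp
          fix y assume y: "R ts \<le> y" "y \<le> L"
          have yO: "(y, ts) \<in> \<Omega>" using y ts tsT by (simp add: Om)
          show "0 \<le> Pfun \<beta> (\<rho> y ts) \<and> Pfun \<beta> (\<rho> y ts) \<le> B"
            using Pfun_bounds[OF \<beta>_pos _ \<rho>m_gt] \<rho>_bounds[OF yO] unfolding B_def by blast
        next
          show "R ts < rs" "rs < L" using inner by auto
        qed
        have vV: "\<bar>v rs ts\<bar> \<le> V" using V(2)[OF inK] .
        have dl: "\<delta> * (2 * V * L + 2 * Dn * L / Rmin + 2 * Dn) < lamnn * \<epsilon> * nm / 2"
          using \<delta>C unfolding C0_def \<eta>_def .
        have be: "b rs ts \<ge> 0" "e rs ts \<ge> 0" using b_nonneg[OF inO] e_nonneg[OF inO] by auto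
        show ?thesis
          using final_arith[OF n_pde[OF inOi] FrE[unfolded E_def] ntpos cb vV nrb nrrb rs0(2) Rmin(1) be(1) be(2)
              nrs2(3) nrs NB(2) nrs2(4) consts_pos(3) \<epsilon> consts_pos(4) consts_pos(5) consts_pos(6) consts_pos(7)
              consts_pos(1) \<delta> L_pos dl] by blast
      qed
    qed
  qed
  show ?thesis using main n_nonneg unfolding N_def by auto
qed

end
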